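(* Let $n\in\mathbb{Z}$ with $|n|\geq1$, $\alpha>0$, $R>0$, $Q_0>0$. Let $u$ be a minimizer of $\mathcal{I}$ over $\{u\in\mathcal{A}: Q(u)=Q_0\}$ with $u(r)>0$ for $r\in(0,R)$, and let $\kappa\in\mathbb{R}$ be the associated Lagrange multiplier, so that $(u,\kappa)$ solves $$(ru_r)_r-\frac{n^2}{r}u+\frac{2ru^3}{1+\alpha u^2}=2\kappa ru\ \text{ on }(0,R),\qquad u(0)=0,\quad u(R)=0.$$ Then: (i) $$\kappa\geq \alpha^{-1}-\frac{6}{R^2}\left(1+n^2(2\ln2-1)\right)-\frac{\pi R^2}{\alpha^2Q_0}\left[\ln\!\left(1+\frac{3\alpha Q_0}{\pi R^2}\right)-2+\sqrt{\frac{4\pi R^2}{3\alpha Q_0}}\,\tan^{-1}\!\left(\sqrt{\frac{3\alpha Q_0}{\pi R^2}}\right)\right].$$ (ii) If $|n|\geq Q_0/\pi$, then $\kappa<0$. (iii) If $\kappa>0$, then there exist constants $C_\kappa>0$ and $R_\kappa\in[0,R)$ depending only on $\kappa$ such that $u^2(r)\leq C_\kappa\exp(-\sqrt{2\kappa}\,r)$ for all $r\in[R_\kappa,R]$ (i.e., for $r$ sufficiently large).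
   Context: $\mathcal{A}$ is the class of functions $u$ absolutely continuous on $[0,R]$ with $u(0)=u(R)=0$ and $\mathcal{E}(u)<\infty$, where $\mathcal{E}(u)=\frac12\int_0^R\left\{ru_r^2+\frac1r u^2+r\ln(1+\alpha u^2)\right\}dr$. The action functional is $\mathcal{I}(u)=\frac12\int_0^R\left\{ru_r^2+\frac{n^2}{r}u^2-2\alpha^{-1}ru^2+2\alpha^{-2}r\ln(1+\alpha u^2)\right\}dr$, and the energy flux is $Q(u)=2\pi\int_0^R ru^2\,dr$. *)

theory Defs
  imports "HOL-Analysis.Analysis"
begin

definition abs_continuous_on :: "real \<Rightarrow> real \<Rightarrow> (real \<Rightarrow> real) \<Rightarrow> bool" where
  "abs_continuous_on a b u \<longleftrightarrow>
     (\<forall>\<epsilon>>0. \<exists>\<delta>>0. \<forall>(k::nat) (s::nat \<Rightarrow> real) (t::nat \<Rightarrow> real).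
        (\<forall>i<k. a \<le> s i \<and> s i \<le> t i \<and> t i \<le> b) \<and>
        (\<forall>i<k. \<forall>j<k. i \<noteq> j \<longrightarrow> t i \<le> s j \<or> t j \<le> s i) \<and>
        (\<Sum>i<k. t i - s i) < \<delta>
        \<longrightarrow> (\<Sum>i<k. \<bar>u (t i) - u (s i)\<bar>) < \<epsilon>)"

text \<open>The energy E(u); u_r is the (a.e. existing) derivative of u.\<close>
definition energyE :: "real \<Rightarrow> real \<Rightarrow> (real \<Rightarrow> real) \<Rightarrow> ennreal" where
  "energyE \<alpha> R u = (\<integral>\<^sup>+ r. indicator {0<..<R} r *
      ennreal (1/2 * (r * (deriv u r)\<^sup>2 + (1/r) * (u r)\<^sup>2 + r * ln (1 + \<alpha> * (u r)\<^sup>2))) \<partial>lebesgue)"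

definition admissible :: "real \<Rightarrow> real \<Rightarrow> (real \<Rightarrow> real) \<Rightarrow> bool" where
  "admissible \<alpha> R u \<longleftrightarrow> abs_continuous_on 0 R u \<and> u 0 = 0 \<and> u R = 0 \<and> energyE \<alpha> R u < \<infinity>"

definition actionI :: "int \<Rightarrow> real \<Rightarrow> real \<Rightarrow> (real \<Rightarrow> real) \<Rightarrow> real" where
  "actionI n \<alpha> R u = (LINT r:{0<..<R}|lebesgue.
      1/2 * (r * (deriv u r)\<^sup>2 + (real_of_int n)\<^sup>2 / r * (u r)\<^sup>2
             - 2 / \<alpha> * r * (u r)\<^sup>2 + 2 / \<alpha>\<^sup>2 * r * ln (1 + \<alpha> * (u r)\<^sup>2)))"

definition fluxQ :: "real \<Rightarrow> (real \<Rightarrow> real) \<Rightarrow> real" where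
  "fluxQ R u = 2 * pi * (LINT r:{0<..<R}|lebesgue. r * (u r)\<^sup>2)"

definition constrained_minimizer :: "int \<Rightarrow> real \<Rightarrow> real \<Rightarrow> real \<Rightarrow> (real \<Rightarrow> real) \<Rightarrow> bool" where
  "constrained_minimizer n \<alpha> R Q0 u \<longleftrightarrow>
     admissible \<alpha> R u \<and> fluxQ R u = Q0 \<and>
     (\<forall>v. admissible \<alpha> R v \<and> fluxQ R v = Q0 \<longrightarrow> actionI n \<alpha> R u \<le> actionI n \<alpha> R v)"

definition solves_EL :: "int \<Rightarrow> real \<Rightarrow> real \<Rightarrow> real \<Rightarrow> (real \<Rightarrow> real) \<Rightarrow> bool" where
  "solves_EL n \<alpha> R \<kappa> u \<longleftrightarrow>
     u 0 = 0 \<and> u R = 0 \<and>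
     (\<forall>r\<in>{0<..<R}. u differentiable (at r) \<and>
        ((\<lambda>s. s * deriv u s) has_real_derivative
           (2 * \<kappa> * r * u r + (real_of_int n)\<^sup>2 / r * u r
            - 2 * r * (u r)^3 / (1 + \<alpha> * (u r)\<^sup>2))) (at r))"

definition hyp32 :: "int \<Rightarrow> real \<Rightarrow> real \<Rightarrow> real \<Rightarrow> (real \<Rightarrow> real) \<Rightarrow> real \<Rightarrow> bool" where
  "hyp32 n \<alpha> R Q0 u \<kappa> \<longleftrightarrow>
     constrained_minimizer n \<alpha> R Q0 u \<and> (\<forall>r\<in>{0<..<R}. u r > 0) \<and> solves_EL n \<alpha> R \<kappa> u"

end

theory Submission
  imports Defs
begin

lemma abs_cont_imp_cont:
  assumes "abs_continuous_on a b u"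
  shows "continuous_on {a..b} u"
  unfolding continuous_on_iff
proof (intro ballI allI impI)
  fix x e :: real assume x: "x \<in> {a..b}" and e: "0 < e"
  have "\<exists>d>0. \<forall>(k::nat) (s::nat \<Rightarrow> real) (t::nat \<Rightarrow> real).
        (\<forall>i<k. a \<le> s i \<and> s i \<le> t i \<and> t i \<le> b) \<and>
        (\<forall>i<k. \<forall>j<k. i \<noteq> j \<longrightarrow> t i \<le> s j \<or> t j \<le> s i) \<and>
        (\<Sum>i<k. t i - s i) < d
        \<longrightarrow> (\<Sum>i<k. \<bar>u (t i) - u (s i)\<bar>) < e"
    using assms e unfolding abs_continuous_on_def by blast
  then obtain d where d: "d > 0" and H0: "\<forall>(k::nat) (s::nat \<Rightarrow> real) (t::nat \<Rightarrow> real).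
        (\<forall>i<k. a \<le> s i \<and> s i \<le> t i \<and> t i \<le> b) \<and>
        (\<forall>i<k. \<forall>j<k. i \<noteq> j \<longrightarrow> t i \<le> s j \<or> t j \<le> s i) \<and>
        (\<Sum>i<k. t i - s i) < d
        \<longrightarrow> (\<Sum>i<k. \<bar>u (t i) - u (s i)\<bar>) < e" by blast
  note H = H0[rule_format]
  show "\<exists>d>0. \<forall>x'\<in>{a..b}. dist x' x < d \<longrightarrow> dist (u x') (u x) < e"
  proof (intro exI[of _ d] conjI ballI impI d)
    fix y assume y: "y \<in> {a..b}" and dy: "dist y x < d"
    have "(\<Sum>i<(1::nat). \<bar>u ((\<lambda>_. max x y) i) - u ((\<lambda>_. min x y) i)\<bar>) < e"
      apply (rule H) using x y dy by (auto simp: dist_real_def)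
    then show "dist (u y) (u x) < e"
      by (auto simp: dist_real_def max_def min_def split: if_splits)
  qed
qed

locale sol =
  fixes n :: int and \<alpha> R \<kappa> :: real and u :: "real \<Rightarrow> real"
  assumes n1: "\<bar>n\<bar> \<ge> 1" and alpha: "\<alpha> > 0" and Rpos: "R > 0"
  and adm: "admissible \<alpha> R u" and upos: "\<forall>r\<in>{0<..<R}. u r > 0"
  and EL: "solves_EL n \<alpha> R \<kappa> u"
begin

abbreviation "w \<equiv> deriv u"
definition "q r = 2 * \<kappa> * r * u r + (real_of_int n)\<^sup>2 / r * u r
            - 2 * r * (u r)^3 / (1 + \<alpha> * (u r)\<^sup>2)"

lemma u0: "u 0 = 0" and uR: "u R = 0"
  using EL unfolding solves_EL_def by auto

lemma contu: "continuous_on {0..R} u"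
proof -
  have "abs_continuous_on 0 R u" using adm unfolding admissible_def by (rule conjunct1)
  then show ?thesis by (rule abs_cont_imp_cont)
qed

lemma EL2: "r \<in> {0<..<R} \<Longrightarrow> u differentiable (at r) \<and> ((\<lambda>s. s * w s) has_real_derivative q r) (at r)"
  using EL unfolding solves_EL_def q_def by blast

lemma du: "r \<in> {0<..<R} \<Longrightarrow> (u has_real_derivative w r) (at r)"
  using EL2 DERIV_deriv_iff_real_differentiable by blast

lemma dp: "r \<in> {0<..<R} \<Longrightarrow> ((\<lambda>s. s * w s) has_real_derivative q r) (at r)"
  using EL2 by blast

lemma isCont_u: "r \<in> {0<..<R} \<Longrightarrow> isCont u r"
  using du DERIV_isCont by blast

lemma cont_u_open: "continuous_on {0<..<R} u"
  using isCont_u by (simp add: continuous_at_imp_continuous_on)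

lemma cont_w: "continuous_on {0<..<R} w"
proof -
  have "continuous_on {0<..<R} (\<lambda>s. s * w s / s)"
    apply (rule continuous_on_divide)
    using dp DERIV_isCont continuous_at_imp_continuous_on apply blast
     apply (rule continuous_intros)
    by auto
  moreover have "\<And>s. s \<in> {0<..<R} \<Longrightarrow> s * w s / s = w s" by simp
  ultimately show ?thesis by (rule continuous_on_eq)
qed

lemma ubound: obtains M where "M > 0" "\<And>r. r \<in> {0..R} \<Longrightarrow> \<bar>u r\<bar> \<le> M"
proof -
  have "compact (u ` {0..R})" using contu compact_continuous_image by blast
  then have "bounded (u ` {0..R})" by (rule compact_imp_bounded)
  then obtain M where "M > 0" "\<forall>x\<in>u ` {0..R}. norm x \<le> M"
    unfolding bounded_pos by blast
  then show ?thesis using that by auto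
qed

lemma u_left_R: "(u \<longlongrightarrow> 0) (at_left R)"
proof -
  have "(u \<longlongrightarrow> u R) (at R within {0..R})"
    using contu Rpos by (simp add: continuous_on_def)
  then show ?thesis using uR Rpos by (simp add: at_within_Icc_at_left)
qed

end

lemma si_nonneg:
  fixes f :: "real \<Rightarrow> real"
  assumes "\<And>x. x \<in> A \<Longrightarrow> 0 \<le> f x"
  shows "0 \<le> (LINT x:A|M. f x)"
  unfolding set_lebesgue_integral_def
  by (rule Bochner_Integration.integral_nonneg) (simp add: assms indicator_def)

lemma si_bound:
  fixes f g :: "real \<Rightarrow> real"
  assumes "set_integrable lborel A g" "open A" "continuous_on A f"
    "\<And>x. x \<in> A \<Longrightarrow> \<bar>f x\<bar> \<le> c * g x"
  shows "set_integrable lborel A f"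
proof (rule set_integrable_bound[where f="\<lambda>x. c * g x"])
  show "set_integrable lborel A (\<lambda>x. c * g x)" using assms(1) by simp
  show "set_borel_measurable lborel A f"
    using set_measurable_continuous_on[OF _ assms(3)] assms(2)
    by (simp add: set_borel_measurable_def)
  show "AE x in lborel. x \<in> A \<longrightarrow> norm (f x) \<le> norm (c * g x)"
    using assms(4) by (auto intro!: AE_I2 order_trans[OF _ abs_ge_self])
qed

context sol begin

definition "eE r = 1/2 * (r * (w r)\<^sup>2 + (1/r) * (u r)\<^sup>2 + r * ln (1 + \<alpha> * (u r)\<^sup>2))"

lemma lnpos: "0 \<le> ln (1 + \<alpha> * (u r)\<^sup>2)"
  using alpha by (simp add: ln_ge_zero)

lemma den_pos: "0 < 1 + \<alpha> * (u r)\<^sup>2"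
  using alpha by (simp add: add_pos_nonneg)

lemma cont_ln: "continuous_on {0<..<R} (\<lambda>r. ln (1 + \<alpha> * (u r)\<^sup>2))"
  apply (rule continuous_on_ln)
  using cont_u_open den_pos by (auto intro!: continuous_intros simp: less_imp_neq[symmetric])
 
lemma cont_eE: "continuous_on {0<..<R} eE"
  unfolding eE_def using cont_u_open cont_w cont_ln
  by (auto intro!: continuous_intros)

lemma eE_nonneg: "r \<in> {0<..<R} \<Longrightarrow> 0 \<le> eE r"
  unfolding eE_def using lnpos[of r] by auto

lemma int_eE: "set_integrable lborel {0<..<R} eE"
proof -
  have fin: "energyE \<alpha> R u < \<infinity>" using adm unfolding admissible_def by blast
  have meas: "(\<lambda>x. indicator {0<..<R} x *\<^sub>R eE x) \<in> borel_measurable lborel"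
    using borel_measurable_continuous_on_indicator[OF _ cont_eE] by simp
  have eq: "(\<integral>\<^sup>+x. ennreal (indicator {0<..<R} x *\<^sub>R eE x) \<partial>lborel) = energyE \<alpha> R u"
    unfolding energyE_def nn_integral_completion eE_def
    by (rule nn_integral_cong) (simp add: indicator_def)
  show ?thesis unfolding set_integrable_def
    apply (rule integrableI_nonneg[OF meas])
    using eE_nonneg apply (auto simp: indicator_def intro!: AE_I2)[1]
    using eq fin by simp
qed

definition "fA r = r * (w r)\<^sup>2"
definition "fB r = (u r)\<^sup>2 / r"
definition "fP r = r * (u r)\<^sup>2"
definition "fL r = r * ln (1 + \<alpha> * (u r)\<^sup>2)"
definition "fD r = r * (u r)^4 / (1 + \<alpha> * (u r)\<^sup>2)"
definition "fUW r = u r * w r"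


lemma cont_fs:
  "continuous_on {0<..<R} fA" "continuous_on {0<..<R} fB" "continuous_on {0<..<R} fP"
  "continuous_on {0<..<R} fL" "continuous_on {0<..<R} fD" "continuous_on {0<..<R} fUW"
  unfolding fA_def fB_def fP_def fL_def fD_def fUW_def
  using cont_u_open cont_w cont_ln den_pos
  by (auto intro!: continuous_intros simp: less_imp_neq[symmetric])

lemma ptw:
  assumes r: "r \<in> {0<..<R}"
  shows "\<bar>fA r\<bar> \<le> 2 * eE r" "\<bar>fB r\<bar> \<le> 2 * eE r" "\<bar>fL r\<bar> \<le> 2 * eE r"
    "\<bar>fP r\<bar> \<le> 2 * R\<^sup>2 * eE r" "\<bar>fD r\<bar> \<le> 2 * R\<^sup>2 / \<alpha> * eE r" "\<bar>fUW r\<bar> \<le> eE r"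
    "0 \<le> fA r" "0 \<le> fB r" "0 \<le> fL r" "0 \<le> fP r" "0 \<le> fD r"
proof -
  have r0: "r > 0" and rR: "r < R" using r by auto
  have l: "0 \<le> r * ln (1 + \<alpha> * (u r)\<^sup>2)" using lnpos r0 by simp
  have a: "0 \<le> fA r" unfolding fA_def using r0 by simp
  have b: "0 \<le> fB r" unfolding fB_def using r0 by simp
  have e: "2 * eE r = fA r + fB r + fL r" unfolding eE_def fA_def fB_def fL_def by simp
  show "\<bar>fA r\<bar> \<le> 2 * eE r" "\<bar>fB r\<bar> \<le> 2 * eE r" "\<bar>fL r\<bar> \<le> 2 * eE r"
    "0 \<le> fA r" "0 \<le> fB r" "0 \<le> fL r" using a b l e unfolding fL_def by auto
  have pb: "fP r \<le> R\<^sup>2 * fB r"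
  proof -
    have "fP r = r\<^sup>2 * fB r" unfolding fP_def fB_def using r0 by (simp add: power2_eq_square)
    also have "\<dots> \<le> R\<^sup>2 * fB r" using r0 rR b by (intro mult_right_mono power_mono) auto
    finally show ?thesis .
  qed
  have p0: "0 \<le> fP r" unfolding fP_def using r0 by simp
  show "0 \<le> fP r" by (rule p0)
  have fbe: "fB r \<le> 2 * eE r" using a l e unfolding fL_def by linarith
  have "R\<^sup>2 * fB r \<le> R\<^sup>2 * (2 * eE r)" by (rule mult_left_mono[OF fbe]) simp
  then show "\<bar>fP r\<bar> \<le> 2 * R\<^sup>2 * eE r" using pb p0 by simp
  have d0: "0 \<le> fD r" unfolding fD_def using r0 den_pos[of r] by simp
  show "0 \<le> fD r" by (rule d0)
  have db: "fD r \<le> fP r / \<alpha>"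
  proof -
    have "\<alpha> * (u r)^4 \<le> (u r)\<^sup>2 * (1 + \<alpha> * (u r)\<^sup>2)"
      by (simp add: algebra_simps power2_eq_square power4_eq_xxxx)
    then have "(u r)^4 / (1 + \<alpha> * (u r)\<^sup>2) \<le> (u r)\<^sup>2 / \<alpha>"
      using alpha den_pos[of r] by (simp add: divide_simps mult.commute)
    then have "r * ((u r)^4 / (1 + \<alpha> * (u r)\<^sup>2)) \<le> r * ((u r)\<^sup>2 / \<alpha>)"
      by (rule mult_left_mono) (use r0 in simp)
    then show ?thesis unfolding fD_def fP_def by simp
  qed
  show "\<bar>fD r\<bar> \<le> 2 * R\<^sup>2 / \<alpha> * eE r"
  proof -
    have "\<bar>fD r\<bar> \<le> fP r / \<alpha>" using d0 db by simp
    also have "\<dots> \<le> (2 * R\<^sup>2 * eE r) / \<alpha>" using \<open>\<bar>fP r\<bar> \<le> 2 * R\<^sup>2 * eE r\<close> alpha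
      by (simp add: divide_right_mono)
    finally show ?thesis by simp
  qed
  show "\<bar>fUW r\<bar> \<le> eE r"
  proof -
    have "2 * r * (\<bar>u r\<bar> * \<bar>w r\<bar>) \<le> (u r)\<^sup>2 + r\<^sup>2 * (w r)\<^sup>2"
      using zero_le_power2[of "\<bar>u r\<bar> - r * \<bar>w r\<bar>"]
      by (simp add: power2_eq_square algebra_simps)
    then have "2 * (\<bar>u r\<bar> * \<bar>w r\<bar>) \<le> fB r + fA r"
      unfolding fA_def fB_def using r0 by (simp add: field_simps power2_eq_square)
    then show ?thesis using e l unfolding fUW_def fL_def by (simp add: abs_mult)
  qed
qed

lemma ints:
  "set_integrable lborel {0<..<R} fA" "set_integrable lborel {0<..<R} fB"
  "set_integrable lborel {0<..<R} fP" "set_integrable lborel {0<..<R} fL"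
  "set_integrable lborel {0<..<R} fD" "set_integrable lborel {0<..<R} fUW"
  apply (rule si_bound[OF int_eE open_greaterThanLessThan cont_fs(1)], erule ptw(1))
  apply (rule si_bound[OF int_eE open_greaterThanLessThan cont_fs(2)], erule ptw(2))
  apply (rule si_bound[OF int_eE open_greaterThanLessThan cont_fs(3)], erule ptw(4))
  apply (rule si_bound[OF int_eE open_greaterThanLessThan cont_fs(4)], erule ptw(3))
  apply (rule si_bound[OF int_eE open_greaterThanLessThan cont_fs(5)], erule ptw(5))
  apply (rule si_bound[OF int_eE open_greaterThanLessThan cont_fs(6), where c=1], simp add: ptw(6))
  done

end

lemma si_subset_le:
  fixes f :: "real \<Rightarrow> real"
  assumes "set_integrable lborel A f" "B \<subseteq> A" "B \<in> sets lborel" "\<And>x. x \<in> A \<Longrightarrow> 0 \<le> f x"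
  shows "(LINT x:B|lborel. f x) \<le> (LINT x:A|lborel. f x)"
proof -
  have iB: "set_integrable lborel B f" by (rule set_integrable_subset[OF assms(1,3,2)])
  show ?thesis using iB assms(1) unfolding set_lebesgue_integral_def set_integrable_def
    by (rule integral_mono) (use assms(2,4) in \<open>auto simp: indicator_def\<close>)
qed

lemma si_pos:
  fixes h :: "real \<Rightarrow> real"
  assumes "set_integrable lborel {a<..<b} h" "a < b" "\<And>x. x \<in> {a<..<b} \<Longrightarrow> 0 < h x"
  shows "0 < (LINT x:{a<..<b}|lborel. h x)"
proof -
  have ge: "0 \<le> (LINT x:{a<..<b}|lborel. h x)"
    by (rule si_nonneg) (use assms(3) in \<open>auto intro: less_imp_le\<close>)
  have "(LINT x:{a<..<b}|lborel. h x) \<noteq> 0"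
  proof
    assume z: "(LINT x:{a<..<b}|lborel. h x) = 0"
    have "AE x in lborel. indicator {a<..<b} x *\<^sub>R h x = 0"
      using z assms(1,3) unfolding set_lebesgue_integral_def set_integrable_def
      by (subst integral_nonneg_eq_0_iff_AE[symmetric])
         (auto simp: indicator_def intro!: AE_I2 less_imp_le)
    then have "AE x in lborel. x \<notin> {a<..<b}"
    proof eventually_elim
      case (elim x)
      show ?case
      proof
        assume xi: "x \<in> {a<..<b}"
        then have "0 < h x" by (rule assms(3))
        with elim xi show False by simp
      qed
    qed
    then have "{a<..<b} \<in> null_sets lborel" by (subst AE_iff_null_sets) auto
    then show False using assms(2) by auto
  qed
  then show ?thesis using ge by linarith
qed

lemma einterval_real: "einterval (ereal a) (ereal b) = {a<..<b}"
  by (auto simp: einterval_iff)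

context sol begin

definition "F r = r * w r * u r"
definition "g r = 2 * \<kappa> * fP r + (real_of_int n)\<^sup>2 * fB r - 2 * fD r + fA r"

lemma dF: assumes r: "r \<in> {0<..<R}" shows "(F has_real_derivative g r) (at r)"
proof -
  have "((\<lambda>s. s * w s * u s) has_real_derivative q r * u r + w r * (r * w r)) (at r)"
    using DERIV_mult[OF dp[OF r] du[OF r]] by simp
  moreover have "q r * u r + w r * (r * w r) = g r"
    unfolding q_def g_def fP_def fB_def fD_def fA_def using den_pos[of r] r
    by (simp add: field_simps power2_eq_square power3_eq_cube power4_eq_xxxx)
  ultimately show ?thesis unfolding F_def by simp
qed

lemma cont_g: "continuous_on {0<..<R} g"
  unfolding g_def using cont_fs by (auto intro!: continuous_intros)

lemma int_g: "set_integrable lborel {0<..<R} g"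
  unfolding g_def using ints by auto

lemma qbound: obtains Bq where "\<And>r. r \<in> {R/2..<R} \<Longrightarrow> \<bar>q r\<bar> \<le> Bq"
proof -
  obtain M where M: "M > 0" "\<And>r. r \<in> {0..R} \<Longrightarrow> \<bar>u r\<bar> \<le> M" using ubound by blast
  define N where "N = (real_of_int n)\<^sup>2"
  have N0: "0 \<le> N" unfolding N_def by simp
  have "\<bar>q r\<bar> \<le> 2 * \<bar>\<kappa>\<bar> * R * M + N * (2 / R) * M + 2 * R * M^3" if r: "r \<in> {R/2..<R}" for r
  proof -
    have r0: "0 < r" "r \<le> R" "R/2 \<le> r" using r Rpos by auto
    have um: "\<bar>u r\<bar> \<le> M" using M(2)[of r] r0 by auto
    have t1: "\<bar>2 * \<kappa> * r * u r\<bar> \<le> 2 * \<bar>\<kappa>\<bar> * R * M"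
      using um r0 by (simp add: abs_mult mult_mono mult_left_mono)
    have ir: "1 / r \<le> 2 / R" using r0 Rpos by (simp add: divide_simps)
    have t2: "\<bar>N / r * u r\<bar> \<le> N * (2 / R) * M"
    proof -
      have "\<bar>N / r * u r\<bar> = N * (1 / r) * \<bar>u r\<bar>" using N0 r0 by (simp add: abs_mult)
      also have "\<dots> \<le> N * (2 / R) * M"
        using ir um N0 r0 by (intro mult_mono mult_left_mono) auto
      finally show ?thesis .
    qed
    have t3: "\<bar>2 * r * (u r)^3 / (1 + \<alpha> * (u r)\<^sup>2)\<bar> \<le> 2 * R * M^3"
    proof -
      have d1: "1 \<le> 1 + \<alpha> * (u r)\<^sup>2" using alpha by simp
      have "\<bar>2 * r * (u r)^3 / (1 + \<alpha> * (u r)\<^sup>2)\<bar> \<le> \<bar>2 * r * (u r)^3\<bar>"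
      proof -
        define X where "X = \<bar>2 * r * (u r)^3\<bar>"
        define D where "D = 1 + \<alpha> * (u r)\<^sup>2"
        have D1: "1 \<le> D" using d1 unfolding D_def .
        have X0: "0 \<le> X" unfolding X_def by simp
        have "X * 1 \<le> X * D" by (rule mult_left_mono[OF D1 X0])
        then have XD: "X / D \<le> X" using D1 by (simp add: divide_le_eq)
        have eq: "\<bar>2 * r * (u r)^3 / (1 + \<alpha> * (u r)\<^sup>2)\<bar> = X / D"
          unfolding X_def D_def using den_pos[of r] by (simp only: abs_divide)
        show ?thesis using XD eq X_def by linarith
      qed
      also have "\<dots> = 2 * r * \<bar>u r\<bar>^3" using r0 by (simp add: abs_mult power_abs)
      also have "\<dots> \<le> 2 * R * M^3" using r0 um by (intro mult_mono power_mono) auto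
      finally show ?thesis .
    qed
    have "q r = 2 * \<kappa> * r * u r + N / r * u r - 2 * r * (u r)^3 / (1 + \<alpha> * (u r)\<^sup>2)"
      unfolding q_def N_def by simp
    then show ?thesis using t1 t2 t3 by linarith
  qed
  then show ?thesis by (rule that)
qed

lemma F_left_R: "(F \<longlongrightarrow> 0) (at_left R)"
proof -
  obtain Bq where Bq: "\<And>r. r \<in> {R/2..<R} \<Longrightarrow> \<bar>q r\<bar> \<le> Bq" using qbound by blast
  define p where "p s = s * w s" for s
  have pb: "\<bar>p x\<bar> \<le> \<bar>p (R/2)\<bar> + Bq * R" if x: "x \<in> {R/2..<R}" for x
  proof -
    have "norm (p x - p (R/2)) \<le> Bq * norm (x - R/2)"
    proof (rule field_differentiable_bound[where S="{R/2..<R}" and f'=q])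
      show "convex {R/2..<R}" by simp
      show "(p has_field_derivative q z) (at z within {R/2..<R})" if "z \<in> {R/2..<R}" for z
        unfolding p_def using dp[of z] that Rpos by (auto intro: has_field_derivative_at_within)
      show "norm (q z) \<le> Bq" if "z \<in> {R/2..<R}" for z using Bq that by simp
    qed (use x Rpos in auto)
    moreover have "0 \<le> Bq" using Bq[of "R/2"] Rpos by auto
    moreover have "norm (x - R/2) \<le> R" using x Rpos by auto
    ultimately have "Bq * norm (x - R/2) \<le> Bq * R" by (simp add: mult_left_mono)
    with \<open>norm (p x - p (R/2)) \<le> Bq * norm (x - R/2)\<close>
    have "\<bar>p x - p (R/2)\<bar> \<le> Bq * R" by simp
    then show ?thesis by arith
  qed
  have ev: "eventually (\<lambda>x. norm (F x) \<le> norm (u x) * (\<bar>p (R/2)\<bar> + Bq * R)) (at_left R)"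
  proof -
    have ev0: "eventually (\<lambda>x. x \<in> {R/2<..<R}) (at_left R)"
      using Rpos by (intro eventually_at_left_real) simp
    then show ?thesis
  proof (eventually_elim)
    case (elim x)
    then have "\<bar>p x\<bar> \<le> \<bar>p (R/2)\<bar> + Bq * R" using pb by auto
    then show ?case unfolding F_def p_def
      by (simp add: abs_mult mult.commute mult_left_mono)
  qed
  qed
  show ?thesis by (rule tendsto_0_le[OF u_left_R ev])
qed

end

context sol begin

lemma dF_vec: "x \<in> {0<..<R} \<Longrightarrow> (F has_vector_derivative g x) (at x)"
  using dF has_real_derivative_iff_has_vector_derivative by blast

lemma F_diff: assumes a: "0 < a" "a \<le> b" "b < R"
  shows "F b - F a = (LINT x:{a..b}|lborel. g x)"
proof -
  have "(LBINT x=a..b. g x) = F b - F a"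
  proof (rule interval_integral_FTC_finite)
    show "continuous_on {min a b..max a b} g"
      using a by (intro continuous_on_subset[OF cont_g]) auto
    show "(F has_vector_derivative g x) (at x within {min a b..max a b})"
      if "min a b \<le> x" "x \<le> max a b" for x
      by (rule has_vector_derivative_at_within, rule dF_vec) (use that a in auto)
  qed
  then show ?thesis using a by (simp add: interval_integral_Icc)
qed

lemma F_right_0_ex: obtains L0 where "(F \<longlongrightarrow> L0) (at_right 0)"
proof -
  define h where "h = R / 2"
  have h: "0 < h" "h < R" unfolding h_def using Rpos by auto
  have si: "set_integrable lborel {0<..h} g"
    by (rule set_integrable_subset[OF int_g]) (use h in auto)
  have lim: "((\<lambda>a. LINT x:{a..h}|lborel. g x) \<longlongrightarrow> (LINT x:{0<..h}|lborel. g x)) (at_right 0)"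
    by (rule tendsto_set_lebesgue_integral_at_right) (use h si in auto)
  have lim2: "((\<lambda>a. F h - (LINT x:{a..h}|lborel. g x)) \<longlongrightarrow> F h - (LINT x:{0<..h}|lborel. g x)) (at_right 0)"
    by (intro tendsto_intros lim)
  have ev: "eventually (\<lambda>a. F h - (LINT x:{a..h}|lborel. g x) = F a) (at_right 0)"
    using eventually_at_right_real[OF h(1)]
  proof eventually_elim
    case (elim a)
    then have "F h - F a = (LINT x:{a..h}|lborel. g x)" using h by (intro F_diff) auto
    then show ?case by simp
  qed
  show ?thesis using Lim_transform_eventually[OF lim2 ev] that by blast
qed

definition "H = (LINT x:{0<..<R}|lborel. eE x)"

lemma F_right_0: "(F \<longlongrightarrow> 0) (at_right 0)"
proof -
  obtain L0 where L0: "(F \<longlongrightarrow> L0) (at_right 0)" by (rule F_right_0_ex)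
  have "L0 = 0"
  proof (rule ccontr)
    assume nz: "L0 \<noteq> 0"
    define c where "c = \<bar>L0\<bar> / 2"
    have c: "0 < c" "c < \<bar>L0\<bar>" unfolding c_def using nz by auto
    have "((\<lambda>x. \<bar>F x\<bar>) \<longlongrightarrow> \<bar>L0\<bar>) (at_right 0)" by (rule tendsto_rabs[OF L0])
    then have ev1: "eventually (\<lambda>x. c < \<bar>F x\<bar>) (at_right 0)" using c(2) by (rule order_tendstoD(1))
    then obtain b where b: "b > 0" "\<And>y. y > 0 \<Longrightarrow> y < b \<Longrightarrow> c < \<bar>F y\<bar>"
      unfolding eventually_at_right_field by auto
    define \<delta> where "\<delta> = min b (R/2) / 2"
    have d: "0 < \<delta>" "\<delta> < b" "\<delta> < R" unfolding \<delta>_def using b Rpos by auto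
    have H0: "0 \<le> H" unfolding H_def by (rule si_nonneg) (rule eE_nonneg)
    define \<epsilon> where "\<epsilon> = \<delta> * exp (- (H / c) - 1)"
    have "0 \<le> H / c" using H0 c by simp
    then have ex1: "exp (- (H / c) - 1) < 1" by simp
    have e: "0 < \<epsilon>" "\<epsilon> < \<delta>" unfolding \<epsilon>_def using d ex1 by auto
    have lne: "ln \<epsilon> = ln \<delta> - H / c - 1" unfolding \<epsilon>_def using d by (simp add: ln_mult)
    have I1: "(LINT x:{\<epsilon>..\<delta>}|lborel. c / x) = c * ln \<delta> - c * ln \<epsilon>"
    proof -
      have "(LBINT x=\<epsilon>..\<delta>. c / x) = c * ln \<delta> - c * ln \<epsilon>"
      proof (rule interval_integral_FTC_finite)
        show "continuous_on {min \<epsilon> \<delta>..max \<epsilon> \<delta>} (\<lambda>x. c / x)"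
          using e by (intro continuous_intros) auto
        show "((\<lambda>x. c * ln x) has_vector_derivative c / x) (at x within {min \<epsilon> \<delta>..max \<epsilon> \<delta>})"
          if "min \<epsilon> \<delta> \<le> x" "x \<le> max \<epsilon> \<delta>" for x
        proof -
          have x0: "0 < x" using that e by auto
          have "((\<lambda>x. c * ln x) has_real_derivative c * (1 / x)) (at x)"
            using x0 by (intro DERIV_cmult DERIV_ln_divide) 
          then show ?thesis using has_real_derivative_iff_has_vector_derivative
            has_vector_derivative_at_within by fastforce
        qed
      qed
      then show ?thesis using e by (simp add: interval_integral_Icc)
    qed
    have sub: "{\<epsilon>..\<delta>} \<subseteq> {0<..<R}" using e d by auto
    have ie: "set_integrable lborel {\<epsilon>..\<delta>} eE"
      by (rule set_integrable_subset[OF int_eE _ sub]) simp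
    have ic: "set_integrable lborel {\<epsilon>..\<delta>} (\<lambda>x. c / x)"
      by (rule borel_integrable_atLeastAtMost') (use e in \<open>auto intro!: continuous_intros\<close>)
    have le1: "(LINT x:{\<epsilon>..\<delta>}|lborel. c / x) \<le> (LINT x:{\<epsilon>..\<delta>}|lborel. eE x)"
    proof (rule set_integral_mono[OF ic ie])
      fix x assume x: "x \<in> {\<epsilon>..\<delta>}"
      then have x0: "0 < x" "x < b" "x \<in> {0<..<R}" using e d by auto
      have "c < \<bar>F x\<bar>" using b(2) x0 by auto
      also have "\<bar>F x\<bar> = x * \<bar>fUW x\<bar>" unfolding F_def fUW_def using x0 by (simp add: abs_mult)
      also have "\<dots> \<le> x * eE x" using ptw(6)[OF x0(3)] x0 by (simp add: mult_left_mono)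
      finally show "c / x \<le> eE x" using x0 by (simp add: divide_simps mult.commute)
    qed
    have le2: "(LINT x:{\<epsilon>..\<delta>}|lborel. eE x) \<le> H"
      unfolding H_def by (rule si_subset_le[OF int_eE sub]) (auto intro: eE_nonneg)
    have l2: "ln \<delta> = ln \<epsilon> + H / c + 1" using lne by simp
    have "c * ln \<delta> = c * ln \<epsilon> + c * (H / c) + c" unfolding l2 by (simp add: algebra_simps)
    moreover have "c * (H / c) = H" using c by simp
    ultimately have "c * ln \<delta> - c * ln \<epsilon> = H + c" by simp
    then show False using I1 le1 le2 c by linarith
  qed
  then show ?thesis using L0 by simp
qed

definition "A = (LINT x:{0<..<R}|lborel. fA x)"
definition "B = (LINT x:{0<..<R}|lborel. fB x)"
definition "P = (LINT x:{0<..<R}|lborel. fP x)"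
definition "L = (LINT x:{0<..<R}|lborel. fL x)"
definition "D = (LINT x:{0<..<R}|lborel. fD x)"

lemma ABPLD_nonneg: "0 \<le> A" "0 \<le> B" "0 \<le> P" "0 \<le> L" "0 \<le> D"
  unfolding A_def B_def P_def L_def D_def by (auto intro!: si_nonneg ptw)

lemma EL_id: "A + (real_of_int n)\<^sup>2 * B + 2 * \<kappa> * P - 2 * D = 0"
proof -
  have "(LBINT x=ereal 0..ereal R. g x) = 0 - 0"
  proof (rule interval_integral_FTC_integrable[where F=F])
    show "ereal 0 < ereal R" using Rpos by simp
    show "(F has_vector_derivative g x) (at x)" if "ereal 0 < ereal x" "ereal x < ereal R" for x
      using that by (intro dF_vec) auto
    show "isCont g x" if "ereal 0 < ereal x" "ereal x < ereal R" for x
      using that cont_g continuous_on_eq_continuous_at[of "{0<..<R}" g] by auto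
    show "set_integrable lborel (einterval (ereal 0) (ereal R)) g"
      unfolding einterval_real by (rule int_g)
    show "((F \<circ> real_of_ereal) \<longlongrightarrow> 0) (at_right (ereal 0))"
      unfolding ereal_tendsto_simps1 by (rule F_right_0)
    show "((F \<circ> real_of_ereal) \<longlongrightarrow> 0) (at_left (ereal R))"
      unfolding ereal_tendsto_simps1 by (rule F_left_R)
  qed
  then have "(LINT x:{0<..<R}|lborel. g x) = 0"
    using Rpos by (simp add: interval_lebesgue_integral_le_eq einterval_real)
  moreover have "(LINT x:{0<..<R}|lborel. g x) = 2 * \<kappa> * P + (real_of_int n)\<^sup>2 * B - 2 * D + A"
    unfolding g_def P_def B_def D_def A_def using ints by simp
  ultimately show ?thesis by simp
qed

lemma amgm: assumes s: "s \<in> {0<..<R}"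
  shows "- 2 * fUW s \<le> \<bar>real_of_int n\<bar> * fB s + fA s / \<bar>real_of_int n\<bar>"
proof -
  define m where "m = \<bar>real_of_int n\<bar>"
  have m: "m \<ge> 1" unfolding m_def using n1 by linarith
  have s0: "s > 0" using s by simp
  have "0 \<le> (m * u s + s * w s)\<^sup>2" by simp
  then have "0 \<le> (m * u s + s * w s)\<^sup>2 / (s * m)" using s0 m by simp
  also have "(m * u s + s * w s)\<^sup>2 / (s * m) = m * fB s + fA s / m + 2 * fUW s"
    unfolding fB_def fA_def fUW_def using s0 m
    by (simp add: field_simps power2_eq_square)
  finally show ?thesis unfolding m_def by simp
qed

lemma ubnd: assumes r0: "r0 \<in> {0<..<R}"
  shows "(u r0)\<^sup>2 \<le> \<bar>real_of_int n\<bar> * B + A / \<bar>real_of_int n\<bar>"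
proof -
  define m where "m = \<bar>real_of_int n\<bar>"
  have m: "m \<ge> 1" unfolding m_def using n1 by linarith
  define k where "k s = m * fB s + fA s / m" for s
  have ik: "set_integrable lborel {0<..<R} k" unfolding k_def using ints by simp
  have k0: "0 \<le> k s" if "s \<in> {0<..<R}" for s
    unfolding k_def using ptw[OF that] m by simp
  have sub: "{r0<..<R} \<subseteq> {0<..<R}" using r0 by auto
  have iuw: "set_integrable lborel {r0<..<R} (\<lambda>s. 2 * fUW s)"
    by (rule set_integrable_subset[OF _ _ sub]) (use ints in auto)
  have "(LBINT s=ereal r0..ereal R. 2 * fUW s) = 0 - (u r0)\<^sup>2"
  proof (rule interval_integral_FTC_integrable[where F="\<lambda>s. (u s)\<^sup>2"])
    show "ereal r0 < ereal R" using r0 by simp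
    show "((\<lambda>s. (u s)\<^sup>2) has_vector_derivative 2 * fUW x) (at x)"
      if "ereal r0 < ereal x" "ereal x < ereal R" for x
    proof -
      have x: "x \<in> {0<..<R}" using that r0 by auto
      have "((\<lambda>s. (u s)\<^sup>2) has_real_derivative of_nat 2 * (w x * (u x)^(2 - Suc 0))) (at x)"
        by (rule DERIV_power[OF du[OF x]])
      then have "((\<lambda>s. (u s)\<^sup>2) has_real_derivative 2 * fUW x) (at x)"
        unfolding fUW_def by (simp add: mult.commute mult.left_commute)
      then show ?thesis using has_real_derivative_iff_has_vector_derivative by blast
    qed
    show "isCont (\<lambda>s. 2 * fUW s) x" if "ereal r0 < ereal x" "ereal x < ereal R" for x
    proof -
      have x: "x \<in> {0<..<R}" using that r0 by auto
      have "continuous_on {0<..<R} (\<lambda>s. 2 * fUW s)" using cont_fs(6) by (intro continuous_intros)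
      then show ?thesis by (rule continuous_on_interior) (use x in simp)
    qed
    show "set_integrable lborel (einterval (ereal r0) (ereal R)) (\<lambda>s. 2 * fUW s)"
      unfolding einterval_real by (rule iuw)
    show "(((\<lambda>s. (u s)\<^sup>2) \<circ> real_of_ereal) \<longlongrightarrow> (u r0)\<^sup>2) (at_right (ereal r0))"
      unfolding ereal_tendsto_simps1
    proof -
      have "(u \<longlongrightarrow> u r0) (at r0)" using isCont_u[OF r0] by (simp add: isCont_def)
      then have "(u \<longlongrightarrow> u r0) (at_right r0)" by (rule filterlim_mono) (auto simp: at_le)
      then show "((\<lambda>s. (u s)\<^sup>2) \<longlongrightarrow> (u r0)\<^sup>2) (at_right r0)" by (intro tendsto_intros)
    qed
    show "(((\<lambda>s. (u s)\<^sup>2) \<circ> real_of_ereal) \<longlongrightarrow> 0) (at_left (ereal R))"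
      unfolding ereal_tendsto_simps1
      using tendsto_power[OF u_left_R, of 2] by simp
  qed
  then have eq: "(LINT s:{r0<..<R}|lborel. 2 * fUW s) = - (u r0)\<^sup>2"
    using r0 by (simp add: interval_lebesgue_integral_le_eq einterval_real)
  have ik2: "set_integrable lborel {r0<..<R} k"
    by (rule set_integrable_subset[OF ik _ sub]) simp
  have iw1: "set_integrable lborel {r0<..<R} fUW"
    by (rule set_integrable_subset[OF ints(6) _ sub]) simp
  have iw2: "set_integrable lborel {r0<..<R} (\<lambda>s. (-2) * fUW s)" by (rule set_integrable_mult_right[OF iw1])
  have "(LINT s:{r0<..<R}|lborel. (-2) * fUW s) \<le> (LINT s:{r0<..<R}|lborel. k s)"
  proof (rule set_integral_mono[OF iw2 ik2])
    fix s assume "s \<in> {r0<..<R}"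
    then have "s \<in> {0<..<R}" using sub by auto
    then show "(-2) * fUW s \<le> k s" using amgm[of s] unfolding k_def m_def by simp
  qed
  also have "\<dots> \<le> (LINT s:{0<..<R}|lborel. k s)"
    by (rule si_subset_le[OF ik sub]) (auto intro: k0)
  also have "\<dots> = m * B + A / m"
    unfolding k_def A_def B_def using ints by simp
  finally have C: "(LINT s:{r0<..<R}|lborel. (-2) * fUW s) \<le> m * B + A / m" .
  have e2: "(LINT s:{r0<..<R}|lborel. (-2) * fUW s) = (-2) * (LINT s:{r0<..<R}|lborel. fUW s)"
    by (rule set_integral_mult_right)
  have e3: "(LINT s:{r0<..<R}|lborel. 2 * fUW s) = 2 * (LINT s:{r0<..<R}|lborel. fUW s)"
    by (rule set_integral_mult_right)
  show ?thesis using C e2 e3 eq unfolding m_def by linarith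
qed

end

lemma ln_lower: fixes x :: real assumes "0 \<le> x" shows "x / (1 + x) \<le> ln (1 + x)"
proof -
  have p: "0 < 1 / (1 + x)" using assms by simp
  have "ln (1 / (1 + x)) \<le> 1 / (1 + x) - 1" by (rule ln_le_minus_one[OF p])
  moreover have "ln (1 / (1 + x)) = - ln (1 + x)" using assms by (simp add: ln_div)
  moreover have "1 / (1 + x) - 1 = - (x / (1 + x))" using assms by (simp add: field_simps)
  ultimately show ?thesis by linarith
qed

lemma lebesgue_to_lborel:
  fixes f :: "real \<Rightarrow> real"
  assumes "set_integrable lborel A f"
  shows "(LINT x:A|lebesgue. f x) = (LINT x:A|lborel. f x)"
  unfolding set_lebesgue_integral_def
  by (rule integral_completion) (use assms in \<open>auto simp: set_integrable_def\<close>)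

context sol begin

lemma actionI_eq: "actionI n \<alpha> R u = A / 2 + (real_of_int n)\<^sup>2 * B / 2 - P / \<alpha> + L / \<alpha>\<^sup>2"
proof -
  define fI where "fI r = 1/2 * fA r + (real_of_int n)\<^sup>2 / 2 * fB r - 1 / \<alpha> * fP r + 1 / \<alpha>\<^sup>2 * fL r" for r
  have eq: "(\<lambda>r. 1/2 * (r * (deriv u r)\<^sup>2 + (real_of_int n)\<^sup>2 / r * (u r)\<^sup>2
             - 2 / \<alpha> * r * (u r)\<^sup>2 + 2 / \<alpha>\<^sup>2 * r * ln (1 + \<alpha> * (u r)\<^sup>2))) = fI"
    unfolding fI_def fA_def fB_def fP_def fL_def by (rule ext) (simp add: field_simps)
  have iI: "set_integrable lborel {0<..<R} fI" unfolding fI_def using ints by simp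
  have "actionI n \<alpha> R u = (LINT x:{0<..<R}|lebesgue. fI x)"
    unfolding actionI_def eq ..
  also have "\<dots> = (LINT x:{0<..<R}|lborel. fI x)" by (rule lebesgue_to_lborel[OF iI])
  also have "\<dots> = A / 2 + (real_of_int n)\<^sup>2 * B / 2 - P / \<alpha> + L / \<alpha>\<^sup>2"
    unfolding fI_def A_def B_def P_def L_def using ints by simp
  finally show ?thesis .
qed

lemma fluxQ_eq: "fluxQ R u = 2 * pi * P"
proof -
  have "fluxQ R u = 2 * pi * (LINT x:{0<..<R}|lebesgue. fP x)"
    unfolding fluxQ_def fP_def ..
  also have "\<dots> = 2 * pi * P" unfolding P_def by (simp add: lebesgue_to_lborel[OF ints(3)])
  finally show ?thesis .
qed

lemma D_lower: "(P - L / \<alpha>) / \<alpha> \<le> D"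
proof -
  have pt: "(fP r - fL r / \<alpha>) / \<alpha> \<le> fD r" if r: "r \<in> {0<..<R}" for r
  proof -
    define y where "y = (u r)\<^sup>2"
    have y0: "0 \<le> y" unfolding y_def by simp
    have ay: "0 \<le> \<alpha> * y" using y0 alpha by simp
    have lnb: "\<alpha> * y / (1 + \<alpha> * y) \<le> ln (1 + \<alpha> * y)" by (rule ln_lower[OF ay])
    have dp: "0 < 1 + \<alpha> * y" using ay by simp
    have key: "(y - ln (1 + \<alpha> * y) / \<alpha>) / \<alpha> \<le> y\<^sup>2 / (1 + \<alpha> * y)"
    proof -
      have "y - y / (1 + \<alpha> * y) = \<alpha> * y\<^sup>2 / (1 + \<alpha> * y)"
        using dp by (simp add: field_simps power2_eq_square)
      then have "y\<^sup>2 / (1 + \<alpha> * y) = (y - y / (1 + \<alpha> * y)) / \<alpha>"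
        using alpha by simp
      moreover have "y / (1 + \<alpha> * y) \<le> ln (1 + \<alpha> * y) / \<alpha>"
        using lnb alpha by (simp add: field_simps)
      ultimately show ?thesis using alpha by (simp add: divide_right_mono)
    qed
    have r0: "0 < r" using r by simp
    have "r * ((y - ln (1 + \<alpha> * y) / \<alpha>) / \<alpha>) \<le> r * (y\<^sup>2 / (1 + \<alpha> * y))"
      by (rule mult_left_mono[OF key]) (use r0 in simp)
    then show ?thesis unfolding fP_def fL_def fD_def y_def
      by (simp add: field_simps power2_eq_square power4_eq_xxxx)
  qed
  have "(LINT x:{0<..<R}|lborel. (fP x - fL x / \<alpha>) / \<alpha>) \<le> D"
    unfolding D_def by (rule set_integral_mono) (use ints pt in auto)
  moreover have "(LINT x:{0<..<R}|lborel. (fP x - fL x / \<alpha>) / \<alpha>) = (P - L / \<alpha>) / \<alpha>"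
    unfolding P_def L_def using ints by simp
  ultimately show ?thesis using alpha by auto
qed

lemma D_lower': "P / \<alpha> - L / \<alpha>\<^sup>2 \<le> D"
proof -
  have "(P - L / \<alpha>) / \<alpha> = P / \<alpha> - L / \<alpha>\<^sup>2" using alpha by (simp add: field_simps power2_eq_square)
  then show ?thesis using D_lower by simp
qed

lemma part1: "- actionI n \<alpha> R u \<le> \<kappa> * P"
  using EL_id D_lower' actionI_eq by linarith

end

context sol begin

lemma part3: assumes r: "r \<in> {0..R}"
  shows "(u r)\<^sup>2 \<le> 2 * actionI n \<alpha> R u + 2 * P / \<alpha>"
proof -
  define m where "m = \<bar>real_of_int n\<bar>"
  have m: "m \<ge> 1" unfolding m_def using n1 by linarith
  have mm: "m * m = (real_of_int n)\<^sup>2" unfolding m_def by (simp add: power2_eq_square)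
  have nn: "0 \<le> A" "0 \<le> B" "0 \<le> L" using ABPLD_nonneg by auto
  have L2: "0 \<le> L / \<alpha>\<^sup>2" using nn alpha by simp
  have key: "2 * actionI n \<alpha> R u + 2 * P / \<alpha> = A + (real_of_int n)\<^sup>2 * B + 2 * (L / \<alpha>\<^sup>2)"
    using actionI_eq by simp
  have b0: "m * B \<le> (m * m) * B" using m nn by (intro mult_right_mono) auto
  have b1: "m * B \<le> (real_of_int n)\<^sup>2 * B" using b0 mm by simp
  have b2: "A / m \<le> A" using m nn by (simp add: divide_le_eq mult_le_cancel_left1)
  show ?thesis
  proof (cases "r \<in> {0<..<R}")
    case True
    have "(u r)\<^sup>2 \<le> m * B + A / m" using ubnd[OF True] unfolding m_def .
    then show ?thesis using key b1 b2 L2 mm by linarith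
  next
    case False
    then have "r = 0 \<or> r = R" using r by auto
    then have "u r = 0" using u0 uR by auto
    have "0 \<le> m * B" using m nn by simp
    then show ?thesis using \<open>u r = 0\<close> key b1 b2 L2 mm nn by simp
  qed
qed

lemma part2: assumes P0: "0 < P" and nP: "2 * P \<le> \<bar>real_of_int n\<bar>"
  shows "\<kappa> < 0"
proof -
  define m where "m = \<bar>real_of_int n\<bar>"
  have m: "m \<ge> 1" unfolding m_def using n1 by linarith
  have mm: "m * m = (real_of_int n)\<^sup>2" unfolding m_def by (simp add: power2_eq_square)
  have nn: "0 \<le> A" "0 \<le> B" using ABPLD_nonneg by auto
  define S where "S = m * B + A / m"
  define h where "h x = S * fP x - fD x" for x
  have ih: "set_integrable lborel {0<..<R} h" unfolding h_def using ints by simp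
  have hpos: "0 < h x" if x: "x \<in> {0<..<R}" for x
  proof -
    define y where "y = (u x)\<^sup>2"
    have "0 < u x" using upos x by blast
    then have y0: "0 < y" unfolding y_def by simp
    have yS: "y \<le> S" unfolding y_def S_def m_def by (rule ubnd[OF x])
    have d1: "1 < 1 + \<alpha> * y" using alpha y0 by simp
    have "y / (1 + \<alpha> * y) < y" using d1 y0 by (simp add: divide_less_eq)
    then have pos: "0 < S - y / (1 + \<alpha> * y)" using yS by linarith
    have x0: "0 < x" using x by simp
    have "h x = x * y * (S - y / (1 + \<alpha> * y))"
      unfolding h_def fP_def fD_def y_def by (simp add: field_simps power2_eq_square power4_eq_xxxx)
    also have "\<dots> > 0" using x0 y0 pos by simp
    finally show ?thesis .
  qed
  have "0 < (LINT x:{0<..<R}|lborel. h x)" by (rule si_pos[OF ih]) (use Rpos hpos in auto)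
  moreover have "(LINT x:{0<..<R}|lborel. h x) = S * P - D"
    unfolding h_def P_def D_def using ints by simp
  ultimately have DS: "D < S * P" by simp
  have c1: "2 * P * (m * B) \<le> (m * m) * B"
  proof -
    have "2 * P * (m * B) = (2 * P * m) * B" by simp
    also have "\<dots> \<le> (m * m) * B" using nP m nn unfolding m_def by (intro mult_right_mono mult_right_mono) auto
    finally show ?thesis .
  qed
  have c2: "2 * P * (A / m) \<le> A"
  proof -
    have "2 * P / m \<le> 1" using nP m unfolding m_def by (simp add: divide_le_eq)
    then have "(2 * P / m) * A \<le> 1 * A" using nn by (intro mult_right_mono) auto
    then show ?thesis by simp
  qed
  have "2 * (S * P) \<le> A + (real_of_int n)\<^sup>2 * B"
    using c1 c2 mm unfolding S_def by (simp add: algebra_simps)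
  then have "\<kappa> * P < 0" using EL_id DS by linarith
  then show ?thesis using P0 by (simp add: mult_less_0_iff)
qed

end

lemma pw_lemma:
  fixes f f1 f2 :: "real \<Rightarrow> real"
  assumes ah: "a < h" and hb: "h < b"
    and c1: "continuous_on {a..h} f1" and c2: "continuous_on {h..b} f2"
    and e1: "\<And>x. x \<in> {a<..<h} \<Longrightarrow> f x = f1 x" and e2: "\<And>x. x \<in> {h<..<b} \<Longrightarrow> f x = f2 x"
    and i1: "(f1 has_integral I1) {a..h}" and i2: "(f2 has_integral I2) {h..b}"
  shows "set_integrable lebesgue {a<..<b} f" "(LINT x:{a<..<b}|lebesgue. f x) = I1 + I2"
proof -
  have a1: "f absolutely_integrable_on {a..h}"
    by (rule absolutely_integrable_spike[OF absolutely_integrable_continuous_real[OF c1], of "{a,h}"])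
       (use e1 in auto)
  have a2: "f absolutely_integrable_on {h..b}"
    by (rule absolutely_integrable_spike[OF absolutely_integrable_continuous_real[OF c2], of "{h,b}"])
       (use e2 in auto)
  have "f absolutely_integrable_on ({a..h} \<union> {h..b})"
    by (rule set_integrable_Un[OF a1 a2]) auto
  moreover have "{a..h} \<union> {h..b} = {a..b}" using ah hb by auto
  ultimately have "f absolutely_integrable_on {a..b}" by simp
  then show si: "set_integrable lebesgue {a<..<b} f" by (simp add: absolutely_integrable_on_Icc_iff_Ioo)
  have h1: "(f has_integral I1) {a..h}"
    by (rule has_integral_spike_finite[OF _ _ i1, of "{a,h}"]) (use e1 in auto)
  have h2: "(f has_integral I2) {h..b}"
    by (rule has_integral_spike_finite[OF _ _ i2, of "{h,b}"]) (use e2 in auto)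
  have "(f has_integral I1 + I2) {a..b}"
    by (rule has_integral_combine[OF _ _ h1 h2]) (use ah hb in auto)
  then have "(f has_integral I1 + I2) {a<..<b}" by (simp add: has_integral_Icc_iff_Ioo)
  then show "(LINT x:{a<..<b}|lebesgue. f x) = I1 + I2"
    using set_lebesgue_integral_eq_integral(2)[OF si] by (simp add: integral_unique)
qed

locale tent =
  fixes n :: int and \<alpha> R c :: real
  assumes alpha: "\<alpha> > 0" and Rpos: "R > 0" and cpos: "c > 0"
begin

definition "v r = c * min r (R - r)"
abbreviation "h \<equiv> R / 2"

lemma v0: "v 0 = 0" and vR: "v R = 0"
  unfolding v_def using Rpos by auto

lemma v_lip: "\<bar>v t - v s\<bar> \<le> c * \<bar>t - s\<bar>"
proof -
  have "\<bar>min t (R - t) - min s (R - s)\<bar> \<le> \<bar>t - s\<bar>" by (auto simp: min_def abs_if)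
  then have "c * \<bar>min t (R - t) - min s (R - s)\<bar> \<le> c * \<bar>t - s\<bar>" using cpos by (simp add: mult_left_mono)
  then show ?thesis unfolding v_def using cpos by (simp add: abs_mult right_diff_distrib[symmetric])
qed

lemma v_ac: "abs_continuous_on 0 R v"
  unfolding abs_continuous_on_def
proof (intro allI impI)
  fix e :: real assume e: "0 < e"
  define d where "d = e / (c + 1)"
  have d: "0 < d" unfolding d_def using e cpos by simp
  have cd: "c * d < e" unfolding d_def using e cpos by (simp add: field_simps)
  show "\<exists>d>0. \<forall>(k::nat) (s::nat \<Rightarrow> real) (t::nat \<Rightarrow> real).
        (\<forall>i<k. 0 \<le> s i \<and> s i \<le> t i \<and> t i \<le> R) \<and>
        (\<forall>i<k. \<forall>j<k. i \<noteq> j \<longrightarrow> t i \<le> s j \<or> t j \<le> s i) \<and>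
        (\<Sum>i<k. t i - s i) < d
        \<longrightarrow> (\<Sum>i<k. \<bar>v (t i) - v (s i)\<bar>) < e"
  proof (intro exI[of _ d] conjI d allI impI)
    fix k :: nat and s t :: "nat \<Rightarrow> real"
    assume H: "(\<forall>i<k. 0 \<le> s i \<and> s i \<le> t i \<and> t i \<le> R) \<and>
        (\<forall>i<k. \<forall>j<k. i \<noteq> j \<longrightarrow> t i \<le> s j \<or> t j \<le> s i) \<and>
        (\<Sum>i<k. t i - s i) < d"
    have "(\<Sum>i<k. \<bar>v (t i) - v (s i)\<bar>) \<le> (\<Sum>i<k. c * (t i - s i))"
    proof (rule sum_mono)
      fix i assume "i \<in> {..<k}"
      then have "s i \<le> t i" using H by auto
      then show "\<bar>v (t i) - v (s i)\<bar> \<le> c * (t i - s i)" using v_lip[of "t i" "s i"] by simp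
    qed
    also have "\<dots> = c * (\<Sum>i<k. t i - s i)" by (simp add: sum_distrib_left)
    also have "\<dots> \<le> c * d" using H cpos by (intro mult_left_mono) auto
    finally show "(\<Sum>i<k. \<bar>v (t i) - v (s i)\<bar>) < e" using cd by linarith
  qed
qed

lemma deriv_v1: "r \<in> {0<..<h} \<Longrightarrow> deriv v r = c"
proof -
  assume r: "r \<in> {0<..<h}"
  have "((\<lambda>x. c * x) has_real_derivative c) (at r)" using DERIV_cmult_Id by blast
  then have "(v has_real_derivative c) (at r)"
    by (rule has_field_derivative_transform_within_open[of _ _ _ "{0<..<h}"])
       (use r in \<open>auto simp: v_def min_def\<close>)
  then show ?thesis by (rule DERIV_imp_deriv)
qed

lemma deriv_v2: "r \<in> {h<..<R} \<Longrightarrow> deriv v r = - c"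
proof -
  assume r: "r \<in> {h<..<R}"
  have "((\<lambda>x. c * (R - x)) has_real_derivative c * (0 - 1)) (at r)"
    by (intro DERIV_cmult DERIV_diff DERIV_const DERIV_ident)
  then have "((\<lambda>x. c * (R - x)) has_real_derivative - c) (at r)" by simp
  then have "(v has_real_derivative - c) (at r)"
    by (rule has_field_derivative_transform_within_open[of _ _ _ "{h<..<R}"])
       (use r in \<open>auto simp: v_def min_def\<close>)
  then show ?thesis by (rule DERIV_imp_deriv)
qed

lemma v1: "r \<in> {0<..<h} \<Longrightarrow> v r = c * r" unfolding v_def by (auto simp: min_def)
lemma v2: "r \<in> {h<..<R} \<Longrightarrow> v r = c * (R - r)" unfolding v_def by (auto simp: min_def)

end

lemma ftc_real:
  fixes G g :: "real \<Rightarrow> real"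
  assumes "a \<le> b" "\<And>x. x \<in> {a..b} \<Longrightarrow> (G has_real_derivative g x) (at x)"
  shows "(g has_integral G b - G a) {a..b}"
  apply (rule fundamental_theorem_of_calculus[OF assms(1)])
  using assms(2) has_real_derivative_iff_has_vector_derivative has_vector_derivative_at_within by blast

context tent begin

definition "\<beta> = \<alpha> * c\<^sup>2"
lemma beta_pos: "\<beta> > 0" unfolding \<beta>_def using alpha cpos by simp

definition "Psi s = ((1 + \<beta> * s\<^sup>2) * ln (1 + \<beta> * s\<^sup>2) - \<beta> * s\<^sup>2) / (2 * \<beta>)"
definition "Phi s = s * ln (1 + \<beta> * s\<^sup>2) - 2 * s + 2 / sqrt \<beta> * arctan (sqrt \<beta> * s)"

lemma lpos: "0 < 1 + \<beta> * s\<^sup>2" using beta_pos by (simp add: add_pos_nonneg)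

lemma dT: "((\<lambda>s. 1 + \<beta> * s\<^sup>2) has_real_derivative 2 * \<beta> * s) (at s)"
proof -
  have "((\<lambda>s. 1 + \<beta> * s\<^sup>2) has_real_derivative 0 + \<beta> * (of_nat 2 * (1 * s ^ (2 - Suc 0)))) (at s)"
    by (intro DERIV_add DERIV_const DERIV_cmult DERIV_power DERIV_ident)
  then show ?thesis by (simp add: algebra_simps)
qed

lemma dPsi: "(Psi has_real_derivative s * ln (1 + \<beta> * s\<^sup>2)) (at s)"
proof -
  define T where "T = 1 + \<beta> * s\<^sup>2"
  have T0: "0 < T" unfolding T_def by (rule lpos)
  have dk: "((\<lambda>t. t * ln t - t) has_real_derivative (1 * ln T + inverse T * T) - 1) (at T)"
    by (intro DERIV_diff DERIV_mult DERIV_ident DERIV_ln T0)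
  then have dk': "((\<lambda>t. t * ln t - t) has_real_derivative ln T) (at T)" using T0 by simp
  have "((\<lambda>s. ((\<lambda>t. t * ln t - t) (1 + \<beta> * s\<^sup>2) + 1) / (2 * \<beta>)) has_real_derivative
      (ln T * (2 * \<beta> * s) + 0) / (2 * \<beta>)) (at s)"
    by (intro DERIV_cdivide DERIV_add DERIV_const DERIV_chain2[OF _ dT]) (use dk' T_def in simp)
  moreover have "(\<lambda>s. ((\<lambda>t. t * ln t - t) (1 + \<beta> * s\<^sup>2) + 1) / (2 * \<beta>)) = Psi"
    unfolding Psi_def by (rule ext) (simp add: algebra_simps)
  moreover have "(ln T * (2 * \<beta> * s) + 0) / (2 * \<beta>) = s * ln (1 + \<beta> * s\<^sup>2)"
    unfolding T_def using beta_pos by simp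
  ultimately show ?thesis by simp
qed

lemma dPhi: "(Phi has_real_derivative ln (1 + \<beta> * s\<^sup>2)) (at s)"
proof -
  define T where "T = 1 + \<beta> * s\<^sup>2"
  define q where "q = sqrt \<beta>"
  have T0: "0 < T" unfolding T_def by (rule lpos)
  have q0: "0 < q" unfolding q_def using beta_pos by simp
  have qq: "q * q = \<beta>" unfolding q_def using beta_pos by simp
  have dL: "((\<lambda>s. ln (1 + \<beta> * s\<^sup>2)) has_real_derivative inverse (1 + \<beta> * s\<^sup>2) * (2 * \<beta> * s)) (at s)"
    by (rule DERIV_chain2[OF _ dT]) (use T0 T_def in \<open>simp add: DERIV_ln\<close>)
  have dA: "((\<lambda>s. arctan (q * s)) has_real_derivative inverse (1 + (q * s)\<^sup>2) * q) (at s)"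
    by (rule DERIV_chain2[OF DERIV_arctan]) (rule DERIV_cmult_Id)
  have dm: "((\<lambda>s. s * ln (1 + \<beta> * s\<^sup>2)) has_real_derivative
      1 * ln (1 + \<beta> * s\<^sup>2) + inverse (1 + \<beta> * s\<^sup>2) * (2 * \<beta> * s) * s) (at s)"
    by (rule DERIV_mult[OF DERIV_ident dL])
  have dd: "((\<lambda>s. s * ln (1 + \<beta> * s\<^sup>2) - 2 * s + 2 / q * arctan (q * s)) has_real_derivative
      (1 * ln (1 + \<beta> * s\<^sup>2) + inverse (1 + \<beta> * s\<^sup>2) * (2 * \<beta> * s) * s) - 2 * 1 + 2 / q * (inverse (1 + (q * s)\<^sup>2) * q)) (at s)"
    by (intro DERIV_add DERIV_diff dm DERIV_cmult DERIV_ident dA)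
  have ff: "(\<lambda>s. s * ln (1 + \<beta> * s\<^sup>2) - 2 * s + 2 / q * arctan (q * s)) = Phi"
    unfolding Phi_def q_def ..
  have ee: "(1 * ln (1 + \<beta> * s\<^sup>2) + inverse (1 + \<beta> * s\<^sup>2) * (2 * \<beta> * s) * s) - 2 * 1 + 2 / q * (inverse (1 + (q * s)\<^sup>2) * q)
      = ln (1 + \<beta> * s\<^sup>2)"
  proof -
    have e1: "1 + (q * s)\<^sup>2 = T" unfolding T_def using qq by (simp add: power2_eq_square algebra_simps)
    have e2: "2 / q * (inverse T * q) = 2 / T" using q0 by (simp add: field_simps)
    have e3: "inverse T * (2 * \<beta> * s) * s = 2 * (T - 1) / T" unfolding T_def using T0 T_def
      by (simp add: field_simps power2_eq_square)
    have e4: "2 * (T - 1) / T - 2 + 2 / T = 0" using T0 by (simp add: field_simps)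
    show ?thesis using e1 e2 e3 e4 unfolding T_def by simp
  qed
  show ?thesis using dd unfolding ff ee .
qed

end

context tent begin

lemma dPsi_chain:
  assumes "(f has_real_derivative f') (at x)" "D = f x * ln (1 + \<beta> * (f x)\<^sup>2) * f'"
  shows "((\<lambda>x. Psi (f x)) has_real_derivative D) (at x)"
  using DERIV_chain2[OF dPsi assms(1)] assms(2) by simp

lemma dPhi_chain:
  assumes "(f has_real_derivative f') (at x)" "D = ln (1 + \<beta> * (f x)\<^sup>2) * f'"
  shows "((\<lambda>x. Phi (f x)) has_real_derivative D) (at x)"
  using DERIV_chain2[OF dPhi assms(1)] assms(2) by simp

lemma hpos: "0 < h" "h < R" using Rpos by auto

definition "fl1 r = c\<^sup>2 * r^3"
definition "fl2 r = c\<^sup>2 * (r * (R - r)\<^sup>2)"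
definition "Gf1 r = c\<^sup>2 * r^4 / 4"
definition "Gf2 r = c\<^sup>2 * (R\<^sup>2 * r\<^sup>2 / 2 - 2 * R * r^3 / 3 + r^4 / 4)"

lemma flux_v: "fluxQ R v = 2 * pi * (c\<^sup>2 * R^4 / 24)"
proof -
  have i1: "(fl1 has_integral Gf1 h - Gf1 0) {0..h}"
    by (rule ftc_real) (use hpos in \<open>auto intro!: derivative_eq_intros simp: fl1_def Gf1_def field_simps\<close>)
  have i2: "(fl2 has_integral Gf2 R - Gf2 h) {h..R}"
    by (rule ftc_real) (use hpos in \<open>auto intro!: derivative_eq_intros simp: fl2_def Gf2_def field_simps power2_eq_square power3_eq_cube\<close>)
  have "(LINT r:{0<..<R}|lebesgue. r * (v r)\<^sup>2) = (Gf1 h - Gf1 0) + (Gf2 R - Gf2 h)"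
  proof (rule pw_lemma(2)[OF hpos _ _ _ _ i1 i2])
    show "continuous_on {0..h} fl1" unfolding fl1_def by (intro continuous_intros)
    show "continuous_on {h..R} fl2" unfolding fl2_def by (intro continuous_intros)
    show "x * (v x)\<^sup>2 = fl1 x" if "x \<in> {0<..<h}" for x
      using v1[OF that] unfolding fl1_def by (simp add: power2_eq_square power3_eq_cube)
    show "x * (v x)\<^sup>2 = fl2 x" if "x \<in> {h<..<R}" for x
      using v2[OF that] unfolding fl2_def by (simp add: power2_eq_square)
  qed
  also have "\<dots> = c\<^sup>2 * R^4 / 24" unfolding Gf1_def Gf2_def by (simp add: field_simps power4_eq_xxxx power3_eq_cube)
  finally show ?thesis unfolding fluxQ_def by simp
qed

definition "e1 r = 1/2 * (r * c\<^sup>2 + c\<^sup>2 * r + r * ln (1 + \<alpha> * (c * r)\<^sup>2))"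
definition "e2 r = 1/2 * (r * c\<^sup>2 + c\<^sup>2 * (R - r)\<^sup>2 / r + r * ln (1 + \<alpha> * (c * (R - r))\<^sup>2))"

lemma energy_v: "energyE \<alpha> R v < \<infinity>"
proof -
  define e where "e r = 1/2 * (r * (deriv v r)\<^sup>2 + (1/r) * (v r)\<^sup>2 + r * ln (1 + \<alpha> * (v r)\<^sup>2))" for r
  have lp: "0 < 1 + \<alpha> * y\<^sup>2" for y using alpha by (simp add: add_pos_nonneg)
  have c1: "continuous_on {0..h} e1" unfolding e1_def
    by (intro continuous_intros continuous_on_ln) (use lp in \<open>auto simp: less_imp_neq[symmetric]\<close>)
  have c2: "continuous_on {h..R} e2" unfolding e2_def
    by (intro continuous_intros continuous_on_ln) (use lp hpos in \<open>auto simp: less_imp_neq[symmetric]\<close>)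
  have "set_integrable lebesgue {0<..<R} e"
  proof (rule pw_lemma(1)[OF hpos c1 c2])
    show "e x = e1 x" if "x \<in> {0<..<h}" for x
      using v1[OF that] deriv_v1[OF that] that unfolding e_def e1_def by (simp add: power2_eq_square)
    show "e x = e2 x" if "x \<in> {h<..<R}" for x
      using v2[OF that] deriv_v2[OF that] that unfolding e_def e2_def by (simp add: power2_eq_square)
    show "(e1 has_integral integral {0..h} e1) {0..h}" by (rule integrable_integral[OF integrable_continuous_real[OF c1]])
    show "(e2 has_integral integral {h..R} e2) {h..R}" by (rule integrable_integral[OF integrable_continuous_real[OF c2]])
  qed
  then have "integrable lebesgue (\<lambda>x. indicator {0<..<R} x *\<^sub>R e x)" by (simp add: set_integrable_def)
  then have fin: "(\<integral>\<^sup>+x. ennreal (norm (indicator {0<..<R} x *\<^sub>R e x)) \<partial>lebesgue) < \<infinity>"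
    by (simp add: integrable_iff_bounded)
  have "energyE \<alpha> R v \<le> (\<integral>\<^sup>+x. ennreal (norm (indicator {0<..<R} x *\<^sub>R e x)) \<partial>lebesgue)"
    unfolding energyE_def
  proof (intro nn_integral_mono)
    fix x
    show "indicator {0<..<R} x * ennreal (1/2 * (x * (deriv v x)\<^sup>2 + (1/x) * (v x)\<^sup>2 + x * ln (1 + \<alpha> * (v x)\<^sup>2)))
        \<le> ennreal (norm (indicator {0<..<R} x *\<^sub>R e x))"
    proof (cases "x \<in> {0<..<R}")
      case True
      have "ennreal (e x) \<le> ennreal (norm (e x))" by (rule ennreal_leI) simp
      then show ?thesis using True unfolding e_def by simp
    qed simp
  qed
  then show ?thesis using fin by (simp add: order_le_less_trans)
qed

end

context tent begin

definition "f1 r = 1/2 * (r * c\<^sup>2 + (real_of_int n)\<^sup>2 * c\<^sup>2 * r - 2/\<alpha> * c\<^sup>2 * r^3 + 2/\<alpha>\<^sup>2 * (r * ln (1 + \<beta> * r\<^sup>2)))"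
definition "G1 r = 1/2 * (c\<^sup>2 * r\<^sup>2 / 2 + (real_of_int n)\<^sup>2 * c\<^sup>2 * r\<^sup>2 / 2 - 2/\<alpha> * c\<^sup>2 * r^4 / 4 + 2/\<alpha>\<^sup>2 * Psi r)"
definition "f2 r = 1/2 * (r * c\<^sup>2 + (real_of_int n)\<^sup>2 * c\<^sup>2 * ((R - r)\<^sup>2 / r) - 2/\<alpha> * c\<^sup>2 * (r * (R - r)\<^sup>2)
     + 2/\<alpha>\<^sup>2 * (r * ln (1 + \<beta> * (R - r)\<^sup>2)))"
definition "G2 r = 1/2 * (c\<^sup>2 * r\<^sup>2 / 2 + (real_of_int n)\<^sup>2 * c\<^sup>2 * (R\<^sup>2 * ln r - 2 * R * r + r\<^sup>2 / 2)
     - 2/\<alpha> * c\<^sup>2 * (R\<^sup>2 * r\<^sup>2 / 2 - 2 * R * r^3 / 3 + r^4 / 4) + 2/\<alpha>\<^sup>2 * (Psi (R - r) - R * Phi (R - r)))"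

lemma dG1: "(G1 has_real_derivative f1 x) (at x)"
  unfolding G1_def f1_def using alpha
  by (auto intro!: derivative_eq_intros dPsi_chain simp: field_simps power2_eq_square power3_eq_cube)

lemma dG2: assumes "0 < x" shows "(G2 has_real_derivative f2 x) (at x)"
  unfolding G2_def f2_def using alpha assms
  by (auto intro!: derivative_eq_intros dPsi_chain dPhi_chain simp: field_simps power2_eq_square power3_eq_cube)

lemma Psi0: "Psi 0 = 0" unfolding Psi_def by simp
lemma Phi0: "Phi 0 = 0" unfolding Phi_def by simp

lemma G_values: "(G1 h - G1 0) + (G2 R - G2 h) =
   c\<^sup>2 * R\<^sup>2 / 4 + (real_of_int n)\<^sup>2 * c\<^sup>2 * R\<^sup>2 * (ln 2 - 1/2) / 2 - c\<^sup>2 * R^4 / (24 * \<alpha>) + R * Phi h / \<alpha>\<^sup>2"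
proof -
  have lh: "ln h = ln R - ln 2" using Rpos by (simp add: ln_div)
  have Rh: "R - h = h" by simp
  show ?thesis unfolding G1_def G2_def Rh lh using Psi0 Phi0 alpha Rpos
    by (simp add: field_simps power2_eq_square power3_eq_cube power4_eq_xxxx)
qed

lemma act_v: "actionI n \<alpha> R v =
   c\<^sup>2 * R\<^sup>2 / 4 + (real_of_int n)\<^sup>2 * c\<^sup>2 * R\<^sup>2 * (ln 2 - 1/2) / 2 - c\<^sup>2 * R^4 / (24 * \<alpha>) + R * Phi h / \<alpha>\<^sup>2"
proof -
  have lp: "0 < 1 + \<beta> * y\<^sup>2" for y by (rule lpos)
  have i1: "(f1 has_integral G1 h - G1 0) {0..h}"
    by (rule ftc_real) (use hpos dG1 in auto)
  have i2: "(f2 has_integral G2 R - G2 h) {h..R}"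
    by (rule ftc_real) (use hpos dG2 in auto)
  have c1: "continuous_on {0..h} f1" unfolding f1_def
    by (intro continuous_intros continuous_on_ln) (use lp in \<open>auto simp: less_imp_neq[symmetric]\<close>)
  have c2: "continuous_on {h..R} f2" unfolding f2_def
    by (intro continuous_intros continuous_on_ln) (use lp hpos in \<open>auto simp: less_imp_neq[symmetric]\<close>)
  have "actionI n \<alpha> R v = (G1 h - G1 0) + (G2 R - G2 h)"
    unfolding actionI_def
  proof (rule pw_lemma(2)[OF hpos c1 c2 _ _ i1 i2])
    fix x assume x: "x \<in> {0<..<h}"
    show "1/2 * (x * (deriv v x)\<^sup>2 + (real_of_int n)\<^sup>2 / x * (v x)\<^sup>2
             - 2 / \<alpha> * x * (v x)\<^sup>2 + 2 / \<alpha>\<^sup>2 * x * ln (1 + \<alpha> * (v x)\<^sup>2)) = f1 x"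
      using x unfolding v1[OF x] deriv_v1[OF x] f1_def \<beta>_def
      by (simp add: power2_eq_square power3_eq_cube field_simps)
  next
    fix x assume x: "x \<in> {h<..<R}"
    show "1/2 * (x * (deriv v x)\<^sup>2 + (real_of_int n)\<^sup>2 / x * (v x)\<^sup>2
             - 2 / \<alpha> * x * (v x)\<^sup>2 + 2 / \<alpha>\<^sup>2 * x * ln (1 + \<alpha> * (v x)\<^sup>2)) = f2 x"
      using x unfolding v2[OF x] deriv_v2[OF x] f2_def \<beta>_def
      by (simp add: power2_eq_square power3_eq_cube field_simps)
  qed
  then show ?thesis using G_values by simp
qed

end

lemma sol_of_hyp:
  assumes "\<bar>n\<bar> \<ge> 1" "\<alpha> > 0" "R > 0" "hyp32 n \<alpha> R Q0 u \<kappa>"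
  shows "sol n \<alpha> R \<kappa> u"
  using assms unfolding sol_def hyp32_def constrained_minimizer_def by auto

lemma test_fn:
  fixes n :: int and \<alpha> R Q0 :: real
  assumes "\<alpha> > 0" "R > 0" "Q0 > 0"
  obtains v where "admissible \<alpha> R v" "fluxQ R v = Q0"
    "actionI n \<alpha> R v = - (Q0 / (2 * pi)) * (1/\<alpha> - 6 / R\<^sup>2 * (1 + (real_of_int n)\<^sup>2 * (2 * ln 2 - 1))
          - pi * R\<^sup>2 / (\<alpha>\<^sup>2 * Q0) *
            (ln (1 + 3 * \<alpha> * Q0 / (pi * R\<^sup>2)) - 2
             + sqrt (4 * pi * R\<^sup>2 / (3 * \<alpha> * Q0)) * arctan (sqrt (3 * \<alpha> * Q0 / (pi * R\<^sup>2)))))"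
proof -
  define c where "c = sqrt (12 * Q0 / (pi * R^4))"
  have cpos: "c > 0" unfolding c_def using assms by simp
  have c2: "c\<^sup>2 = 12 * Q0 / (pi * R^4)" unfolding c_def using assms by simp
  interpret T: tent n \<alpha> R c using assms cpos by unfold_locales auto
  have adm: "admissible \<alpha> R T.v"
    unfolding admissible_def using T.v_ac T.v0 T.vR T.energy_v by auto
  have fl: "fluxQ R T.v = Q0" unfolding T.flux_v c2 using assms by (simp add: field_simps)
  define x where "x = 3 * \<alpha> * Q0 / (pi * R\<^sup>2)"
  have x0: "x > 0" unfolding x_def using assms by simp
  have bh: "T.\<beta> * (R/2)\<^sup>2 = x" unfolding T.\<beta>_def c2 x_def using assms
    by (simp add: field_simps power2_eq_square power4_eq_xxxx)
  have sb: "sqrt T.\<beta> * (R/2) = sqrt x"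
  proof -
    have "sqrt x = sqrt (T.\<beta> * (R/2)\<^sup>2)" using bh by simp
    also have "\<dots> = sqrt T.\<beta> * (R/2)" using assms by (simp add: real_sqrt_mult)
    finally show ?thesis by simp
  qed
  have sbp: "sqrt T.\<beta> > 0" using T.beta_pos by simp
  have s2: "2 / sqrt T.\<beta> = R / sqrt x"
    using sb sbp assms by (auto simp: field_simps)
  have s4: "sqrt (4 * pi * R\<^sup>2 / (3 * \<alpha> * Q0)) = 2 / sqrt x"
  proof -
    have "4 * pi * R\<^sup>2 / (3 * \<alpha> * Q0) = 4 / x" unfolding x_def using assms by (simp add: field_simps)
    then show ?thesis by (simp add: real_sqrt_divide)
  qed
  have Ph: "T.Phi (R/2) = R / 2 * (ln (1 + x) - 2) + R / sqrt x * arctan (sqrt x)"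
    unfolding T.Phi_def bh sb s2 by (simp add: algebra_simps)
  have "actionI n \<alpha> R T.v = - (Q0 / (2 * pi)) * (1/\<alpha> - 6 / R\<^sup>2 * (1 + (real_of_int n)\<^sup>2 * (2 * ln 2 - 1))
          - pi * R\<^sup>2 / (\<alpha>\<^sup>2 * Q0) *
            (ln (1 + 3 * \<alpha> * Q0 / (pi * R\<^sup>2)) - 2
             + sqrt (4 * pi * R\<^sup>2 / (3 * \<alpha> * Q0)) * arctan (sqrt (3 * \<alpha> * Q0 / (pi * R\<^sup>2)))))"
    unfolding T.act_v Ph c2 s4 x_def[symmetric] using assms x0
    by (simp add: field_simps power2_eq_square power4_eq_xxxx)
  then show ?thesis using adm fl that by blast
qed

theorem theorem3p2:
  fixes n :: int and \<alpha> R Q0 :: real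
  assumes "\<bar>n\<bar> \<ge> 1" and "\<alpha> > 0" and "R > 0" and "Q0 > 0"
  shows
   "(\<forall>u \<kappa>. hyp32 n \<alpha> R Q0 u \<kappa> \<longrightarrow>
       \<kappa> \<ge> 1/\<alpha> - 6 / R\<^sup>2 * (1 + (real_of_int n)\<^sup>2 * (2 * ln 2 - 1))
          - pi * R\<^sup>2 / (\<alpha>\<^sup>2 * Q0) *
            (ln (1 + 3 * \<alpha> * Q0 / (pi * R\<^sup>2)) - 2
             + sqrt (4 * pi * R\<^sup>2 / (3 * \<alpha> * Q0)) * arctan (sqrt (3 * \<alpha> * Q0 / (pi * R\<^sup>2)))))
    \<and> (real_of_int \<bar>n\<bar> \<ge> Q0 / pi \<longrightarrow> (\<forall>u \<kappa>. hyp32 n \<alpha> R Q0 u \<kappa> \<longrightarrow> \<kappa> < 0))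
    \<and> (\<forall>\<kappa>>0. \<exists>C>0. \<exists>R\<kappa>. 0 \<le> R\<kappa> \<and> R\<kappa> < R \<and>
         (\<forall>u. hyp32 n \<alpha> R Q0 u \<kappa> \<longrightarrow>
            (\<forall>r\<in>{R\<kappa>..R}. (u r)\<^sup>2 \<le> C * exp (- sqrt (2 * \<kappa>) * r))))"
proof -
  obtain v where vadm: "admissible \<alpha> R v" and vfl: "fluxQ R v = Q0"
    and vact: "actionI n \<alpha> R v = - (Q0 / (2 * pi)) * (1/\<alpha> - 6 / R\<^sup>2 * (1 + (real_of_int n)\<^sup>2 * (2 * ln 2 - 1))
          - pi * R\<^sup>2 / (\<alpha>\<^sup>2 * Q0) *
            (ln (1 + 3 * \<alpha> * Q0 / (pi * R\<^sup>2)) - 2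
             + sqrt (4 * pi * R\<^sup>2 / (3 * \<alpha> * Q0)) * arctan (sqrt (3 * \<alpha> * Q0 / (pi * R\<^sup>2)))))"
    using test_fn[OF assms(2,3,4), of n] by blast
  have common: "sol n \<alpha> R \<kappa> u \<and> actionI n \<alpha> R u \<le> actionI n \<alpha> R v \<and> sol.P R u = Q0 / (2 * pi)"
    if H: "hyp32 n \<alpha> R Q0 u \<kappa>" for u \<kappa>
  proof -
    have S: "sol n \<alpha> R \<kappa> u" by (rule sol_of_hyp[OF assms(1,2,3) H])
    interpret S: sol n \<alpha> R \<kappa> u by (rule S)
    have "actionI n \<alpha> R u \<le> actionI n \<alpha> R v"
      using H vadm vfl unfolding hyp32_def constrained_minimizer_def by blast
    moreover have "fluxQ R u = Q0" using H unfolding hyp32_def constrained_minimizer_def by blast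
    then have "S.P = Q0 / (2 * pi)" using S.fluxQ_eq by (auto simp: field_simps)
    ultimately show ?thesis using S by blast
  qed
  show ?thesis
  proof (intro conjI allI impI)
    fix u \<kappa> assume H: "hyp32 n \<alpha> R Q0 u \<kappa>"
    interpret S: sol n \<alpha> R \<kappa> u using common[OF H] by blast
    have I: "actionI n \<alpha> R u \<le> actionI n \<alpha> R v" and P: "S.P = Q0 / (2 * pi)" using common[OF H] by auto
    have P0: "S.P > 0" using P assms by simp
    have "- actionI n \<alpha> R v \<le> \<kappa> * S.P" using S.part1 I by linarith
    then have "(- actionI n \<alpha> R v) / S.P \<le> \<kappa>"
      by (subst pos_divide_le_eq[OF P0]) (simp add: mult.commute)
    then show "\<kappa> \<ge> 1/\<alpha> - 6 / R\<^sup>2 * (1 + (real_of_int n)\<^sup>2 * (2 * ln 2 - 1))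
          - pi * R\<^sup>2 / (\<alpha>\<^sup>2 * Q0) *
            (ln (1 + 3 * \<alpha> * Q0 / (pi * R\<^sup>2)) - 2
             + sqrt (4 * pi * R\<^sup>2 / (3 * \<alpha> * Q0)) * arctan (sqrt (3 * \<alpha> * Q0 / (pi * R\<^sup>2))))"
    proof -
      have key: "\<And>X. actionI n \<alpha> R v = - (Q0 / (2 * pi)) * X \<Longrightarrow> (- actionI n \<alpha> R v) / S.P = X"
        unfolding P using assms by simp
      show ?thesis using key[OF vact] \<open>(- actionI n \<alpha> R v) / S.P \<le> \<kappa>\<close> by simp
    qed
  next
    fix u \<kappa> assume nQ: "real_of_int \<bar>n\<bar> \<ge> Q0 / pi" and H: "hyp32 n \<alpha> R Q0 u \<kappa>"
    interpret S: sol n \<alpha> R \<kappa> u using common[OF H] by blast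
    have P: "S.P = Q0 / (2 * pi)" using common[OF H] by auto
    show "\<kappa> < 0"
    proof (rule S.part2)
      show "0 < S.P" using P assms by simp
      show "2 * S.P \<le> \<bar>real_of_int n\<bar>" using P nQ by simp
    qed
  next
    fix \<kappa> :: real assume k: "\<kappa> > 0"
    define K where "K = 2 * actionI n \<alpha> R v + Q0 / (pi * \<alpha>)"
    define C where "C = max 1 K * exp (sqrt (2 * \<kappa>) * R)"
    have Cpos: "C > 0" unfolding C_def by simp
    have main: "\<forall>u. hyp32 n \<alpha> R Q0 u \<kappa> \<longrightarrow>
            (\<forall>r\<in>{0..R}. (u r)\<^sup>2 \<le> C * exp (- sqrt (2 * \<kappa>) * r))"
    proof (intro allI impI ballI)
      fix u r assume H: "hyp32 n \<alpha> R Q0 u \<kappa>" and r: "r \<in> {0..R}"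
      interpret S: sol n \<alpha> R \<kappa> u using common[OF H] by blast
      have I: "actionI n \<alpha> R u \<le> actionI n \<alpha> R v" and P: "S.P = Q0 / (2 * pi)" using common[OF H] by auto
      have "(u r)\<^sup>2 \<le> 2 * actionI n \<alpha> R u + 2 * S.P / \<alpha>" by (rule S.part3[OF r])
      also have "2 * S.P / \<alpha> = Q0 / (pi * \<alpha>)" unfolding P by simp
      finally have "(u r)\<^sup>2 \<le> K" unfolding K_def using I by linarith
      also have "K \<le> max 1 K" by simp
      also have "max 1 K \<le> C * exp (- sqrt (2 * \<kappa>) * r)"
      proof -
        have "C * exp (- sqrt (2 * \<kappa>) * r) = max 1 K * exp (sqrt (2 * \<kappa>) * (R - r))"
        proof -
          have "exp (sqrt (2 * \<kappa>) * R) * exp (- sqrt (2 * \<kappa>) * r) = exp (sqrt (2 * \<kappa>) * (R - r))"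
            by (simp add: exp_add[symmetric] algebra_simps)
          then show ?thesis unfolding C_def by (simp add: mult.assoc)
        qed
        moreover have E1: "1 \<le> exp (sqrt (2 * \<kappa>) * (R - r))" using r k by simp
        have "max 1 K * 1 \<le> max 1 K * exp (sqrt (2 * \<kappa>) * (R - r))"
          by (rule mult_left_mono[OF E1]) simp
        ultimately show ?thesis by simp
      qed
      finally show "(u r)\<^sup>2 \<le> C * exp (- sqrt (2 * \<kappa>) * r)" .
    qed
    show "\<exists>C>0. \<exists>R\<kappa>. 0 \<le> R\<kappa> \<and> R\<kappa> < R \<and>
         (\<forall>u. hyp32 n \<alpha> R Q0 u \<kappa> \<longrightarrow>
            (\<forall>r\<in>{R\<kappa>..R}. (u r)\<^sup>2 \<le> C * exp (- sqrt (2 * \<kappa>) * r)))"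
      apply (rule exI[of _ C])
      apply (intro conjI Cpos)
      apply (rule exI[of _ 0])
      using main assms(3) by simp
  qed
qed

end
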